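(* If $r\ge 2$, then the glued binary tree $GT(r)$ satisfies $\mu(GT(r))=2^r+1$, and the number of $\mu$-sets of $GT(r)$ is $\#\mu(GT(r))=2^{r+1}-2$.
   Context: A perfect binary tree of depth $r\ge1$ is a rooted tree in which every non-leaf vertex has exactly $2$ children and all leaves have depth $r$. The glued binary tree $GT(r)$ is obtained from two copies of the perfect binary tree of depth $r$ by pairwise identifying their leaves (via a fixed isomorphism of the copies). For $S\subseteq V(G)$, two vertices $u,v$ are $S$-visible if there exists a shortest $u,v$-path $P$ with $V(P)\cap S\subseteq\{u,v\}$; $S$ is a mutual-visibility set if every two vertices of $S$ are $S$-visible. A largest mutual-visibility set is a $\mu$-set, and its size is the mutual-visibility number $\mu(G)$. $\#\mu(G)$ denotes the number of $\mu$-sets of $G$. *)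

theory Defs
  imports Main
begin

definition walk :: "'a set \<Rightarrow> ('a \<Rightarrow> 'a \<Rightarrow> bool) \<Rightarrow> 'a list \<Rightarrow> bool" where
  "walk V E p \<longleftrightarrow> p \<noteq> [] \<and> set p \<subseteq> V \<and> (\<forall>i. Suc i < length p \<longrightarrow> E (p ! i) (p ! Suc i))"

text \<open>A shortest u,v-path: a u,v-walk with the minimum number of vertices
  (such a walk is automatically a path).\<close>
definition shortest_path :: "'a set \<Rightarrow> ('a \<Rightarrow> 'a \<Rightarrow> bool) \<Rightarrow> 'a \<Rightarrow> 'a \<Rightarrow> 'a list \<Rightarrow> bool" where
  "shortest_path V E u v p \<longleftrightarrow> walk V E p \<and> hd p = u \<and> last p = v \<and>
     (\<forall>q. walk V E q \<and> hd q = u \<and> last q = v \<longrightarrow> length p \<le> length q)"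

definition S_visible :: "'a set \<Rightarrow> ('a \<Rightarrow> 'a \<Rightarrow> bool) \<Rightarrow> 'a set \<Rightarrow> 'a \<Rightarrow> 'a \<Rightarrow> bool" where
  "S_visible V E S u v \<longleftrightarrow> (\<exists>p. shortest_path V E u v p \<and> set p \<inter> S \<subseteq> {u, v})"

definition mutual_visibility_set :: "'a set \<Rightarrow> ('a \<Rightarrow> 'a \<Rightarrow> bool) \<Rightarrow> 'a set \<Rightarrow> bool" where
  "mutual_visibility_set V E S \<longleftrightarrow> S \<subseteq> V \<and> (\<forall>u\<in>S. \<forall>v\<in>S. S_visible V E S u v)"

definition mu :: "'a set \<Rightarrow> ('a \<Rightarrow> 'a \<Rightarrow> bool) \<Rightarrow> nat" where
  "mu V E = Max {card S | S. mutual_visibility_set V E S}"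

definition mu_sets :: "'a set \<Rightarrow> ('a \<Rightarrow> 'a \<Rightarrow> bool) \<Rightarrow> 'a set set" where
  "mu_sets V E = {S. mutual_visibility_set V E S \<and> card S = mu V E}"

text \<open>Vertices of a perfect binary tree of depth r are binary words of length \<le> r
  (root = [], children of w are w@[b]).  A vertex of GT(r) is a pair (copy, word);
  leaves (words of length r) are shared by both copies and represented with copy False.\<close>

definition canon :: "nat \<Rightarrow> bool \<times> bool list \<Rightarrow> bool \<times> bool list" where
  "canon r x = (if length (snd x) = r then (False, snd x) else x)"

definition GT_V :: "nat \<Rightarrow> (bool \<times> bool list) set" where
  "GT_V r = {(c, w). length w \<le> r \<and> (length w = r \<longrightarrow> c = False)}"

definition GT_E :: "nat \<Rightarrow> bool \<times> bool list \<Rightarrow> bool \<times> bool list \<Rightarrow> bool" where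
  "GT_E r x y \<longleftrightarrow> (\<exists>c w b. length w < r \<and>
      ((x = canon r (c, w) \<and> y = canon r (c, w @ [b])) \<or>
       (y = canon r (c, w) \<and> x = canon r (c, w @ [b]))))"

end

theory Submission
  imports Defs
begin


fun lc :: "'a list \<Rightarrow> 'a list \<Rightarrow> nat" where
  "lc (x#xs) (y#ys) = (if x = y then Suc (lc xs ys) else 0)"
| "lc _ _ = 0"

lemma lc_le1: "lc a b \<le> length a"
  by (induction a b rule: lc.induct) auto
lemma lc_le2: "lc a b \<le> length b"
  by (induction a b rule: lc.induct) auto
lemma lc_sym: "lc a b = lc b a"
  by (induction a b rule: lc.induct) auto
lemma lc_take: "take (lc a b) a = take (lc a b) b"
  by (induction a b rule: lc.induct) auto
lemma lc_max: "k \<le> length a \<Longrightarrow> k \<le> length b \<Longrightarrow> take k a = take k b \<Longrightarrow> k \<le> lc a b"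
proof (induction a b arbitrary: k rule: lc.induct)
  case (1 x xs y ys)
  then show ?case by (cases k) auto
qed auto
lemma lc_self[simp]: "lc a a = length a"
  by (induction a) auto
lemma lc_snoc[simp]: "lc a (a@[x]) = length a"
  by (induction a) auto
lemma lc_ultra: "min (lc a c) (lc c b) \<le> lc a b"
proof -
  let ?k = "min (lc a c) (lc c b)"
  have "take ?k (take (lc a c) a) = take ?k (take (lc a c) c)" using lc_take[of a c] by simp
  then have 1: "take ?k a = take ?k c" by (simp add: min_def split: if_splits)
  have "take ?k (take (lc c b) c) = take ?k (take (lc c b) b)" using lc_take[of c b] by simp
  then have 2: "take ?k c = take ?k b" by (simp add: min_def split: if_splits)
  show ?thesis using lc_le1[of a c] lc_le2[of c b] 1 2 by (intro lc_max) auto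
qed

definition dT :: "'a list \<Rightarrow> 'a list \<Rightarrow> nat" where
  "dT a b = length a + length b - 2 * lc a b"

lemma dT_self[simp]: "dT a a = 0" by (simp add: dT_def)
lemma dT_sym: "dT a b = dT b a" by (simp add: dT_def lc_sym)
lemma dT_snoc: "dT a (a@[x]) = 1" by (simp add: dT_def)

lemma dT_tri: "dT a c \<le> dT a b + dT b c"
proof -
  have "min (lc a b) (lc b c) \<le> lc a c" using lc_ultra[where a=a and c=b and b=c] by (simp add: lc_sym min.commute)
  then show ?thesis using lc_le1[of a b] lc_le2[of a b] lc_le1[of b c] lc_le2[of b c] lc_le1[of a c] lc_le2[of a c]
    unfolding dT_def by (simp add: min_def split: if_splits)
qed

lemma dT_detour:
  assumes "length a < length t" "length b < length t"
  shows "dT a b < dT a t + dT t b"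
proof -
  have "min (lc a t) (lc t b) \<le> lc a b" by (rule lc_ultra)
  then show ?thesis using assms lc_le1[of a t] lc_le2[of a t] lc_le1[of t b] lc_le2[of t b] lc_le1[of a b] lc_le2[of a b]
    unfolding dT_def by (simp add: min_def split: if_splits)
qed


definition tadj :: "'a list \<Rightarrow> 'a list \<Rightarrow> bool" where
  "tadj a b \<longleftrightarrow> (\<exists>x. b = a @ [x]) \<or> (\<exists>x. a = b @ [x])"

lemma snd_canon[simp]: "snd (canon r x) = snd x"
  by (simp add: canon_def)

lemma canon_nonleaf[simp]: "length w \<noteq> r \<Longrightarrow> canon r (c, w) = (c, w)"
  by (simp add: canon_def)

lemma canon_leaf[simp]: "length w = r \<Longrightarrow> canon r (c, w) = (False, w)"
  by (simp add: canon_def)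

lemma GT_V_iff: "x \<in> GT_V r \<longleftrightarrow> length (snd x) \<le> r \<and> (length (snd x) = r \<longrightarrow> fst x = False)"
  by (cases x) (simp add: GT_V_def)

lemma canon_in_V: "length w \<le> r \<Longrightarrow> canon r (c, w) \<in> GT_V r"
  by (simp add: GT_V_iff canon_def)

lemma E_tadj: "GT_E r x y \<Longrightarrow> tadj (snd x) (snd y)"
  unfolding GT_E_def tadj_def by auto

lemma E_copy: "GT_E r x y \<Longrightarrow> length (snd x) < r \<Longrightarrow> length (snd y) < r \<Longrightarrow> fst x = fst y"
  unfolding GT_E_def canon_def by (auto split: if_splits)

lemma E_mk: "length w < r \<Longrightarrow> GT_E r (canon r (c, w)) (canon r (c, w @ [b]))"
  unfolding GT_E_def by blast

lemma E_mk': "length w < r \<Longrightarrow> GT_E r (canon r (c, w @ [b])) (canon r (c, w))"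
  unfolding GT_E_def by blast

lemma dT_step: "dT a b' \<le> dT a b + 1" if "tadj b b'"
proof -
  have "dT b b' = 1" using that unfolding tadj_def using dT_snoc dT_sym by metis
  then show ?thesis using dT_tri[of a b' b] by simp
qed

lemma walk_succ: "walk V E p \<longleftrightarrow> p \<noteq> [] \<and> set p \<subseteq> V \<and> successively E p"
  unfolding walk_def successively_conv_nth by blast

lemma walk_edge: "walk V E p \<Longrightarrow> Suc i < length p \<Longrightarrow> E (p ! i) (p ! Suc i)"
  unfolding walk_def by blast

lemma walk_V: "walk V E p \<Longrightarrow> i < length p \<Longrightarrow> p ! i \<in> V"
  unfolding walk_def by auto

lemma walk_dist:
  assumes "walk (GT_V r) (GT_E r) p" "i \<le> j" "j < length p"
  shows "dT (snd (p!i)) (snd (p!j)) \<le> j - i"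
  using assms(2,3)
proof (induction j)
  case 0
  then show ?case by simp
next
  case (Suc j)
  show ?case
  proof (cases "i = Suc j")
    case True
    then show ?thesis by simp
  next
    case False
    then have ij: "i \<le> j" using Suc.prems by simp
    have IH: "dT (snd (p!i)) (snd (p!j)) \<le> j - i" using Suc.IH[OF ij] Suc.prems by simp
    have "GT_E r (p!j) (p!Suc j)" using walk_edge[OF assms(1)] Suc.prems by simp
    then have "tadj (snd (p!j)) (snd (p!Suc j))" by (rule E_tadj)
    then have "dT (snd (p!i)) (snd (p!Suc j)) \<le> dT (snd (p!i)) (snd (p!j)) + 1" by (rule dT_step)
    then show ?thesis using IH ij by simp
  qed
qed

definition br :: "'a list \<Rightarrow> 'a list \<Rightarrow> 'a option" where
  "br w u = (if take (length w) u = w \<and> u \<noteq> w then Some (u ! length w) else None)"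

lemma take_eq_len: "take (length w) u = w \<Longrightarrow> length w \<le> length u"
  by (drule arg_cong[where f=length]) auto

lemma br_step: assumes "tadj a b" "a \<noteq> w" "b \<noteq> w" shows "br w a = br w b"
proof -
  have key: "br w a = br w (a @ [x])" if "a \<noteq> w" "a @ [x] \<noteq> w" for a x
  proof (cases "take (length w) a = w")
    case True
    then have "length w < length a" using that take_eq_len[OF True]
      by (cases "length w = length a") auto
    then show ?thesis using True that by (simp add: br_def nth_append)
  next
    case False
    have "take (length w) (a @ [x]) \<noteq> w"
    proof
      assume h: "take (length w) (a @ [x]) = w"
      show False
      proof (cases "length w \<le> length a")
        case True
        then show False using h False by simp
      next
        case False
        then have "take (length w) (a @ [x]) = a @ [x]" using take_eq_len[OF h] by simp
        then show False using h that by simp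
      qed
    qed
    then show ?thesis using False by (simp add: br_def)
  qed
  show ?thesis using assms(1) unfolding tadj_def
    using key assms(2,3) by metis
qed

lemma walk_hits:
  assumes "walk (GT_V r) (GT_E r) p" "br w (snd (hd p)) \<noteq> br w (snd (last p))"
  shows "\<exists>i<length p. snd (p!i) = w"
proof (rule ccontr)
  assume na: "\<not> ?thesis"
  have ne: "p \<noteq> []" using assms(1) by (simp add: walk_def)
  have all: "\<forall>i<length p. br w (snd (p!i)) = br w (snd (p!0))"
  proof (intro allI impI)
    fix i assume "i < length p"
    then show "br w (snd (p!i)) = br w (snd (p!0))"
    proof (induction i)
      case 0 then show ?case by simp
    next
      case (Suc i)
      have "GT_E r (p!i) (p!Suc i)" using walk_edge[OF assms(1)] Suc.prems by simp
      then have t: "tadj (snd (p!i)) (snd (p!Suc i))" by (rule E_tadj)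
      have il: "i < length p" using Suc.prems by simp
      have n1: "snd (p!i) \<noteq> w" using na il by blast
      have n2: "snd (p!Suc i) \<noteq> w" using na Suc.prems by blast
      have "br w (snd (p!i)) = br w (snd (p!Suc i))"
        by (rule br_step[OF t n1 n2])
      then show ?case using Suc.IH[OF il] by simp
    qed
  qed
  have "length p - 1 < length p" using ne by simp
  then have "br w (snd (p!(length p - 1))) = br w (snd (p!0))" using all by blast
  moreover have "hd p = p!0" "last p = p!(length p - 1)" using ne by (simp_all add: hd_conv_nth last_conv_nth)
  ultimately show False using assms(2) by simp
qed

lemma walk_copy:
  assumes "walk (GT_V r) (GT_E r) p" "i \<le> j" "j < length p"
    "\<forall>k. i \<le> k \<and> k \<le> j \<longrightarrow> length (snd (p!k)) < r"
  shows "fst (p!j) = fst (p!i)"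
  using assms(2,3,4)
proof (induction j)
  case 0 then show ?case by simp
next
  case (Suc j)
  show ?case
  proof (cases "i = Suc j")
    case True then show ?thesis by simp
  next
    case False
    then have ij: "i \<le> j" using Suc.prems(1) by simp
    have jl: "j < length p" using Suc.prems(2) by simp
    have al: "\<forall>k. i \<le> k \<and> k \<le> j \<longrightarrow> length (snd (p!k)) < r" using Suc.prems(3) by simp
    have IH: "fst (p!j) = fst (p!i)" using Suc.IH[OF ij jl al] .
    have "GT_E r (p!j) (p!Suc j)" using walk_edge[OF assms(1)] Suc.prems(2) by simp
    moreover have "length (snd (p!j)) < r" using Suc.prems(3) ij by simp
    moreover have "length (snd (p!Suc j)) < r" using Suc.prems(1,3) by simp
    ultimately have "fst (p!j) = fst (p!Suc j)" by (rule E_copy)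
    then show ?thesis using IH by simp
  qed
qed

lemma walk_leaf_between:
  assumes "walk (GT_V r) (GT_E r) p" "i \<le> j" "j < length p"
    "length (snd (p!i)) < r" "length (snd (p!j)) < r" "fst (p!i) \<noteq> fst (p!j)"
  shows "\<exists>k. i < k \<and> k < j \<and> length (snd (p!k)) = r"
proof -
  obtain k where k: "i \<le> k" "k \<le> j" "\<not> length (snd (p!k)) < r"
    using walk_copy[OF assms(1-3)] assms(6) by force
  have "p!k \<in> GT_V r" using walk_V[OF assms(1)] k assms(3) by simp
  then have "length (snd (p!k)) = r" using k by (simp add: GT_V_iff)
  moreover have "k \<noteq> i" "k \<noteq> j" using k assms(4,5) by auto
  ultimately show ?thesis using k by (intro exI[of _ k]) auto
qed


lemma lc_butlast: assumes "lc a b < length a" shows "lc (butlast a) b = lc a b"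
proof (rule antisym)
  let ?k = "lc (butlast a) b"
  have "?k \<le> length (butlast a)" by (rule lc_le1)
  then have kl: "?k < length a" using assms by simp
  have "take ?k a = take ?k (butlast a)" using kl by (simp add: take_butlast)
  also have "\<dots> = take ?k b" by (rule lc_take)
  finally show "?k \<le> lc a b" using kl lc_le2[of "butlast a" b] by (intro lc_max) auto
next
  let ?k = "lc a b"
  have "take ?k (butlast a) = take ?k a" using assms by (simp add: take_butlast)
  also have "\<dots> = take ?k b" by (rule lc_take)
  finally show "?k \<le> lc (butlast a) b" using assms lc_le2[of a b] by (intro lc_max) auto
qed

lemma lc_full: assumes "lc a b = length a" "a \<noteq> b"
  shows "length a < length b" "lc a (butlast b) = length a"
proof -
  have t: "take (length a) b = a" using lc_take[of a b] assms(1) by simp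
  have le: "length a \<le> length b" using lc_le2[of a b] assms(1) by simp
  show lt: "length a < length b"
  proof (rule ccontr)
    assume "\<not> ?thesis"
    then have "length a = length b" using le by simp
    then show False using t assms(2) by simp
  qed
  have "take (length a) (butlast b) = a" using t lt by (simp add: take_butlast)
  then have "length a \<le> lc a (butlast b)" using lt by (intro lc_max) auto
  then show "lc a (butlast b) = length a" using lc_le1[of a "butlast b"] by simp
qed

lemma dT_zero: "dT a b = 0 \<Longrightarrow> a = b"
proof -
  assume "dT a b = 0"
  then have "lc a b = length a" "lc a b = length b"
    using lc_le1[of a b] lc_le2[of a b] unfolding dT_def by auto
  then show "a = b" using lc_take[of a b] by simp
qed

lemma tree_path:
  "\<forall>a b. dT a b = n \<longrightarrow> length a \<le> r \<longrightarrow> length b \<le> r \<longrightarrow>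
     (\<exists>q. walk (GT_V r) (GT_E r) q \<and> hd q = canon r (c,a) \<and> last q = canon r (c,b) \<and> length q = n + 1 \<and>
        (\<forall>y\<in>set q. y = canon r (c,a) \<or> y = canon r (c,b) \<or> (fst y = c \<and> length (snd y) < r)))"
proof (induction n)
  case 0
  show ?case
  proof (intro allI impI)
    fix a b :: "bool list"
    assume h: "dT a b = 0" "length a \<le> r" "length b \<le> r"
    from h(1) have ab: "a = b" by (rule dT_zero)
    show "\<exists>q. walk (GT_V r) (GT_E r) q \<and> hd q = canon r (c,a) \<and> last q = canon r (c,b) \<and> length q = 0 + 1 \<and>
        (\<forall>y\<in>set q. y = canon r (c,a) \<or> y = canon r (c,b) \<or> (fst y = c \<and> length (snd y) < r))"
      using h ab by (intro exI[of _ "[canon r (c,a)]"]) (auto simp: walk_def canon_in_V)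
  qed
next
  case (Suc n)
  show ?case
  proof (intro allI impI)
    fix a b :: "bool list"
    assume h: "dT a b = Suc n" "length a \<le> r" "length b \<le> r"
    have ne: "a \<noteq> b" using h(1) by auto
    show "\<exists>q. walk (GT_V r) (GT_E r) q \<and> hd q = canon r (c,a) \<and> last q = canon r (c,b) \<and> length q = Suc n + 1 \<and>
        (\<forall>y\<in>set q. y = canon r (c,a) \<or> y = canon r (c,b) \<or> (fst y = c \<and> length (snd y) < r))"
    proof (cases "lc a b < length a")
      case True
      define a' where "a' = butlast a"
      have an: "a \<noteq> []" using True by auto
      have aa: "a = a' @ [last a]" using an by (simp add: a'_def)
      have lca: "lc a' b = lc a b" using lc_butlast[OF True] by (simp add: a'_def)
      have dn: "dT a' b = n" using h(1) lca an lc_le2[of a b] True unfolding dT_def a'_def by simp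
      have "length a > 0" using an by simp
      then have la': "length a' < r" using h(2) unfolding a'_def length_butlast by arith
      obtain q where q: "walk (GT_V r) (GT_E r) q" "hd q = canon r (c,a')" "last q = canon r (c,b)"
        "length q = n + 1" "\<forall>y\<in>set q. y = canon r (c,a') \<or> y = canon r (c,b) \<or> (fst y = c \<and> length (snd y) < r)"
        using Suc.IH[rule_format, OF dn less_imp_le[OF la'] h(3)] by blast
      have qn: "q \<noteq> []" using q(1) by (simp add: walk_def)
      have e: "GT_E r (canon r (c,a)) (hd q)" using q(2) E_mk'[OF la', of c "last a"] aa by simp
      have w: "walk (GT_V r) (GT_E r) (canon r (c,a) # q)"
        using q(1) e qn h(2) canon_in_V[of a r c] unfolding walk_succ by (auto simp: successively_Cons)
      have ca': "canon r (c,a') = (c,a')" using la' by simp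
      show ?thesis
        using w q qn ca' la' by (intro exI[of _ "canon r (c,a) # q"]) auto
    next
      case False
      then have full: "lc a b = length a" using lc_le1[of a b] by simp
      define b' where "b' = butlast b"
      have lt: "length a < length b" using lc_full[OF full ne] by simp
      have bn: "b \<noteq> []" using lt by auto
      have bb: "b = b' @ [last b]" using bn by (simp add: b'_def)
      have lcb: "lc a b' = length a" using lc_full[OF full ne] by (simp add: b'_def)
      have dn: "dT a b' = n" using h(1) lcb full bn unfolding dT_def b'_def by simp
      have "length b > 0" using bn by simp
      then have lb': "length b' < r" using h(3) unfolding b'_def length_butlast by arith
      obtain q where q: "walk (GT_V r) (GT_E r) q" "hd q = canon r (c,a)" "last q = canon r (c,b')"
        "length q = n + 1" "\<forall>y\<in>set q. y = canon r (c,a) \<or> y = canon r (c,b') \<or> (fst y = c \<and> length (snd y) < r)"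
        using Suc.IH[rule_format, OF dn h(2) less_imp_le[OF lb']] by blast
      have qn: "q \<noteq> []" using q(1) by (simp add: walk_def)
      have e: "GT_E r (last q) (canon r (c,b))" using q(3) E_mk[OF lb', of c "last b"] bb by simp
      have w: "walk (GT_V r) (GT_E r) (q @ [canon r (c,b)])"
        using q(1) e qn h(3) canon_in_V[of b r c] unfolding walk_succ by (auto simp: successively_append_iff)
      have cb': "canon r (c,b') = (c,b')" using lb' by simp
      show ?thesis
        using w q qn cb' lb' by (intro exI[of _ "q @ [canon r (c,b)]"]) auto
    qed
  qed
qed

lemma tree_path':
  assumes "length a \<le> r" "length b \<le> r"
  shows "\<exists>q. walk (GT_V r) (GT_E r) q \<and> hd q = canon r (c,a) \<and> last q = canon r (c,b) \<and> length q = dT a b + 1 \<and>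
        (\<forall>y\<in>set q. y = canon r (c,a) \<or> y = canon r (c,b) \<or> (fst y = c \<and> length (snd y) < r))"
  using tree_path[of "dT a b" r c] assms by blast

lemma walk_ends_dist:
  assumes "walk (GT_V r) (GT_E r) p"
  shows "dT (snd (hd p)) (snd (last p)) \<le> length p - 1"
proof -
  have ne: "p \<noteq> []" using assms by (simp add: walk_def)
  have "dT (snd (p!0)) (snd (p!(length p - 1))) \<le> length p - 1 - 0"
    using walk_dist[OF assms, of 0 "length p - 1"] ne by simp
  then show ?thesis using ne by (simp add: hd_conv_nth last_conv_nth)
qed

lemma sp_len:
  assumes "shortest_path (GT_V r) (GT_E r) (canon r (c,a)) (canon r (c',b)) p" "length a \<le> r" "length b \<le> r"
    "c' = c \<or> length b = r"
  shows "length p = dT a b + 1"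
proof -
  have cb: "canon r (c',b) = canon r (c,b)" using assms(4) by (auto simp: canon_def)
  obtain q where q: "walk (GT_V r) (GT_E r) q" "hd q = canon r (c,a)" "last q = canon r (c,b)" "length q = dT a b + 1"
    using tree_path'[OF assms(2,3), of c] by blast
  have p: "walk (GT_V r) (GT_E r) p" "hd p = canon r (c,a)" "last p = canon r (c,b)"
    "\<forall>q. walk (GT_V r) (GT_E r) q \<and> hd q = canon r (c,a) \<and> last q = canon r (c,b) \<longrightarrow> length p \<le> length q"
    using assms(1) cb unfolding shortest_path_def by auto
  have "length p \<le> dT a b + 1" using p(4) q by fastforce
  moreover have "dT a b \<le> length p - 1" using walk_ends_dist[OF p(1)] p(2,3) by simp
  moreover have "p \<noteq> []" using p(1) by (simp add: walk_def)
  ultimately show ?thesis by (cases "length p") auto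
qed


lemma sp_basic:
  assumes "shortest_path V E u v p"
  shows "walk V E p" "hd p = u" "last p = v" "p \<noteq> []" "p!0 = u" "p!(length p - 1) = v"
  using assms unfolding shortest_path_def walk_def by (auto simp: hd_conv_nth last_conv_nth)

lemma block1:
  assumes S: "S \<subseteq> GT_V r" "(c,w) \<in> S" and lw: "length w < r" and la: "length a < r" and lb: "length b \<le> r"
    and aw: "a \<noteq> w" and bw: "b \<noteq> w" and brw: "br w a \<noteq> br w b"
  shows "\<not> S_visible (GT_V r) (GT_E r) S (c,a) (canon r (c,b))"
proof
  assume "S_visible (GT_V r) (GT_E r) S (c,a) (canon r (c,b))"
  then obtain p where sp: "shortest_path (GT_V r) (GT_E r) (c,a) (canon r (c,b)) p"
    and sub: "set p \<inter> S \<subseteq> {(c,a), canon r (c,b)}"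
    unfolding S_visible_def by blast
  have ca: "canon r (c,a) = (c,a)" using la by simp
  have len: "length p = dT a b + 1" using sp_len[of r c a c b p] sp ca la lb by simp
  note b = sp_basic[OF sp]
  have "br w (snd (hd p)) \<noteq> br w (snd (last p))" using b brw by simp
  then obtain j where j: "j < length p" "snd (p!j) = w" using walk_hits[OF b(1)] by blast
  show False
  proof (cases "fst (p!j) = c")
    case True
    then have "p!j = (c,w)" using j by (simp add: prod_eq_iff)
    then have "(c,w) \<in> set p \<inter> S" using j S by (metis IntI nth_mem)
    moreover have "(c,w) \<noteq> (c,a)" using aw by simp
    moreover have "(c,w) \<noteq> canon r (c,b)" using bw by (metis snd_canon snd_conv)
    ultimately show False using sub by blast
  next
    case False
    have j0: "0 \<le> j" by simp
    have l0: "length (snd (p!0)) < r" using b la by simp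
    have lj: "length (snd (p!j)) < r" using j lw by simp
    have f: "fst (p!0) \<noteq> fst (p!j)" using b False by simp
    obtain k where k: "0 < k" "k < j" "length (snd (p!k)) = r"
      using walk_leaf_between[OF b(1) j0 j(1) l0 lj f] by blast
    let ?t = "snd (p!k)"
    have d1: "dT a ?t \<le> k" using walk_dist[OF b(1), of 0 k] k j b by simp
    have d2: "dT ?t w \<le> j - k" using walk_dist[OF b(1), of k j] k j by simp
    have d3: "dT w b \<le> (length p - 1) - j" using walk_dist[OF b(1), of j "length p - 1"] j b by simp
    have d4: "dT a w < dT a ?t + dT ?t w" using dT_detour[of a ?t w] k la lw by simp
    have d5: "dT a b \<le> dT a w + dT w b" by (rule dT_tri)
    show False using d1 d2 d3 d4 d5 len k j by linarith
  qed
qed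

lemma block2:
  assumes S: "S \<subseteq> GT_V r" "(False,w) \<in> S" "(True,w') \<in> S"
    and lw: "length w < r" "length w' < r" and lz: "length z = r" "length z' = r"
    and br1: "br w z \<noteq> br w z'" and br2: "br w' z \<noteq> br w' z'"
  shows "\<not> S_visible (GT_V r) (GT_E r) S (False,z) (False,z')"
proof
  assume "S_visible (GT_V r) (GT_E r) S (False,z) (False,z')"
  then obtain p where sp: "shortest_path (GT_V r) (GT_E r) (False,z) (False,z') p"
    and sub: "set p \<inter> S \<subseteq> {(False,z), (False,z')}"
    unfolding S_visible_def by blast
  have cz: "canon r (False,z) = (False,z)" "canon r (False,z') = (False,z')" using lz by simp_all
  have len: "length p = dT z z' + 1" using sp_len[of r False z False z' p] sp cz lz by simp
  note b = sp_basic[OF sp]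
  have "br w (snd (hd p)) \<noteq> br w (snd (last p))" using b br1 by simp
  then obtain j where j: "j < length p" "snd (p!j) = w" using walk_hits[OF b(1)] by blast
  have "br w' (snd (hd p)) \<noteq> br w' (snd (last p))" using b br2 by simp
  then obtain j' where j': "j' < length p" "snd (p!j') = w'" using walk_hits[OF b(1)] by blast
  have notin: "x \<in> set p \<Longrightarrow> x \<in> S \<Longrightarrow> length (snd x) < r \<Longrightarrow> False" for x
  proof -
    assume "x \<in> set p" "x \<in> S" "length (snd x) < r"
    then have "x \<in> {(False,z), (False,z')}" using sub by blast
    then show False using \<open>length (snd x) < r\<close> lz by auto
  qed
  have c1: "fst (p!j) = True"
  proof (rule ccontr)
    assume "fst (p!j) \<noteq> True"
    then have "p!j = (False,w)" using j by (simp add: prod_eq_iff)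
    then show False using notin[of "p!j"] nth_mem[OF j(1)] j S lw by simp
  qed
  have c2: "fst (p!j') = False"
  proof (rule ccontr)
    assume "fst (p!j') \<noteq> False"
    then have "p!j' = (True,w')" using j' by (simp add: prod_eq_iff)
    then show False using notin[of "p!j'"] nth_mem[OF j'(1)] j' S lw by simp
  qed
  have lj: "length (snd (p!j)) < r" "length (snd (p!j')) < r" using j j' lw by simp_all
  have d0: "dT z z' \<le> dT z w + dT w z'" "dT w z' \<le> dT w w' + dT w' z'"
    "dT z z' \<le> dT z w' + dT w' z'" "dT z w' \<le> dT z w + dT w w'" using dT_tri by blast+
  show False
  proof (cases "j \<le> j'")
    case True
    obtain k where k: "j < k" "k < j'" "length (snd (p!k)) = r"
      using walk_leaf_between[OF b(1) True j'(1) lj(1) lj(2)] c1 c2 by auto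
    let ?t = "snd (p!k)"
    have d1: "dT z w \<le> j" using walk_dist[OF b(1), of 0 j] j b by simp
    have d2: "dT w ?t \<le> k - j" using walk_dist[OF b(1), of j k] k j' j by simp
    have d3: "dT ?t w' \<le> j' - k" using walk_dist[OF b(1), of k j'] k j' by simp
    have d4: "dT w' z' \<le> (length p - 1) - j'" using walk_dist[OF b(1), of j' "length p - 1"] j' b by simp
    have d5: "dT w w' < dT w ?t + dT ?t w'" using dT_detour[of w ?t w'] k lw by simp
    show False using d0 d1 d2 d3 d4 d5 len k j j' by linarith
  next
    case False
    then have jj: "j' \<le> j" by simp
    obtain k where k: "j' < k" "k < j" "length (snd (p!k)) = r"
      using walk_leaf_between[OF b(1) jj j(1) lj(2) lj(1)] c1 c2 by auto
    let ?t = "snd (p!k)"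
    have d1: "dT z w' \<le> j'" using walk_dist[OF b(1), of 0 j'] j' b by simp
    have d2: "dT w' ?t \<le> k - j'" using walk_dist[OF b(1), of j' k] k j' j by simp
    have d3: "dT ?t w \<le> j - k" using walk_dist[OF b(1), of k j] k j by simp
    have d4: "dT w z' \<le> (length p - 1) - j" using walk_dist[OF b(1), of j "length p - 1"] j b by simp
    have d5: "dT w' w < dT w' ?t + dT ?t w" using dT_detour[of w' ?t w] k lw by simp
    have d6: "dT z z' \<le> dT z w' + dT w' w + dT w z'" using dT_tri[of z z' w'] dT_tri[of w' z' w] by simp
    show False using d6 d1 d2 d3 d4 d5 len k j j' by linarith
  qed
qed


definition ext :: "nat \<Rightarrow> bool list \<Rightarrow> bool list" where
  "ext r u = u @ replicate (r - length u) False"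

lemma ext_len: "length u \<le> r \<Longrightarrow> length (ext r u) = r"
  by (simp add: ext_def)

lemma ext_take: "take (length u) (ext r u) = u"
  by (simp add: ext_def)

lemma take_nth: "take n z = u \<Longrightarrow> i < length u \<Longrightarrow> z ! i = u ! i"
  by (metis length_take min_less_iff_conj nth_take)

lemma prefix_comp: "take (length u) z = u \<Longrightarrow> take (length v) z = v \<Longrightarrow> length u \<le> length v \<Longrightarrow> take (length u) v = u"
  by (metis min.absorb1 take_take)

lemma br_some: "take (length w) z = w \<Longrightarrow> length w < length z \<Longrightarrow> br w z = Some (z ! length w)"
  unfolding br_def by auto

lemma br_none: "take (length w) z \<noteq> w \<Longrightarrow> br w z = None"
  unfolding br_def by auto

lemma ex_leaf: fixes u :: "bool list" assumes "length u < r" shows "\<exists>z. length z = r \<and> take (length u) z = u \<and> z \<noteq> e"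
proof -
  let ?z1 = "ext r (u @ [False])" and ?z2 = "ext r (u @ [True])"
  have l: "length ?z1 = r" "length ?z2 = r" using assms by (simp_all add: ext_len)
  have t1: "take (length u) ?z1 = u" using ext_take[of "u @ [False]" r] by (simp add: ext_def)
  have t2: "take (length u) ?z2 = u" using ext_take[of "u @ [True]" r] by (simp add: ext_def)
  have "?z1 ! length u = False" "?z2 ! length u = True" by (simp_all add: ext_def nth_append)
  then have "?z1 \<noteq> ?z2" by auto
  then show ?thesis using l t1 t2 by metis
qed

lemma br_disj:
  fixes w v z :: "bool list"
  assumes "w \<noteq> v" "length w < length z" "length v < length z"
    "br w z \<noteq> br w v" "br v z \<noteq> br v w"
  shows False
proof -
  have caseA: False if A: "take (length w) v = w" "w \<noteq> v" "length w < length z" "length v < length z"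
    "br w z \<noteq> br w v" "br v z \<noteq> br v w" for w v :: "bool list"
  proof -
    have lwv: "length w < length v" using A(1,2) take_eq_len[OF A(1)]
      by (cases "length w = length v") auto
    have bv: "br w v = Some (v ! length w)" using br_some[OF A(1) lwv] .
    have "take (length v) w = w" using lwv by simp
    then have "br v w = None" using A(2) by (simp add: br_def)
    then have "br v z \<noteq> None" using A(6) by simp
    then have tv: "take (length v) z = v" unfolding br_def by (auto split: if_splits)
    have "take (length w) z = take (length w) (take (length v) z)" using lwv by (simp add: min_def)
    then have tw: "take (length w) z = w" using tv A(1) by simp
    have "z ! length w = v ! length w" using take_nth[OF tv lwv] .
    then have "br w z = Some (v ! length w)" using br_some[OF tw A(3)] by simp
    then show False using bv A(5) by simp
  qed
  show False
  proof (cases "take (length w) v = w")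
    case True
    then show False using caseA[of w v] assms by blast
  next
    case nA: False
    show False
    proof (cases "take (length v) w = v")
      case True
      then show False using caseA[of v w] assms by blast
    next
      case nB: False
      have "br w v = None" using nA by (rule br_none)
      then have "take (length w) z = w" using assms(4) unfolding br_def by (auto split: if_splits)
      moreover have "br v w = None" using nB by (rule br_none)
      then have "take (length v) z = v" using assms(5) unfolding br_def by (auto split: if_splits)
      ultimately show False using nA nB prefix_comp
        by (metis nat_le_linear)
    qed
  qed
qed

lemma two_leaves:
  fixes w :: "bool list"
  assumes r: "r \<ge> 2" and lw: "length w < r"
  shows "\<exists>z1 z2. z1 \<noteq> z2 \<and> length z1 = r \<and> length z2 = r \<and> br w z1 \<noteq> \<beta> \<and> br w z2 \<noteq> \<beta>"
proof (cases \<beta>)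
  case None
  let ?z1 = "ext r (w @ [False])" and ?z2 = "ext r (w @ [True])"
  have l: "length ?z1 = r" "length ?z2 = r" using lw by (simp_all add: ext_len)
  have t1: "take (length w) ?z1 = w" "take (length w) ?z2 = w" by (simp_all add: ext_def)
  have n: "?z1 ! length w = False" "?z2 ! length w = True" by (simp_all add: ext_def nth_append)
  have "br w ?z1 = Some False" "br w ?z2 = Some True"
    using br_some[OF t1(1)] br_some[OF t1(2)] l lw n by simp_all
  then show ?thesis using n l None by (intro exI[of _ ?z1] exI[of _ ?z2]) auto
next
  case (Some b)
  show ?thesis
  proof (cases "w = []")
    case True
    let ?z1 = "ext r [\<not> b, False]" and ?z2 = "ext r [\<not> b, True]"
    have l: "length ?z1 = r" "length ?z2 = r" using r by (simp_all add: ext_len)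
    have n: "?z1 ! 0 = (\<not> b)" "?z2 ! 0 = (\<not> b)" "?z1 ! 1 = False" "?z2 ! 1 = True"
      by (simp_all add: ext_def)
    have "br w ?z1 = Some (\<not> b)" "br w ?z2 = Some (\<not> b)"
      using True l r n by (simp_all add: br_def ext_def)
    then show ?thesis using n l Some by (intro exI[of _ ?z1] exI[of _ ?z2]) auto
  next
    case False
    let ?z1 = "ext r (w @ [\<not> b])" and ?z2 = "ext r [\<not> hd w]"
    have l: "length ?z1 = r" "length ?z2 = r" using lw r by (simp_all add: ext_len)
    have t1: "take (length w) ?z1 = w" by (simp add: ext_def)
    have n1: "?z1 ! length w = (\<not> b)" by (simp add: ext_def nth_append)
    have b1: "br w ?z1 = Some (\<not> b)" using br_some[OF t1] l lw n1 by simp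
    have h1: "?z1 ! 0 = hd w" using False by (simp add: ext_def nth_append hd_conv_nth)
    have h2: "?z2 ! 0 = (\<not> hd w)" by (simp add: ext_def)
    have "take (length w) ?z2 \<noteq> w"
    proof
      assume "take (length w) ?z2 = w"
      then have "?z2 ! 0 = w ! 0" using False by (intro take_nth) auto
      then show False using h2 False by (simp add: hd_conv_nth)
    qed
    then have b2: "br w ?z2 = None" by (rule br_none)
    have "?z1 \<noteq> ?z2" using h1 h2 by auto
    then show ?thesis using b1 b2 l Some by (intro exI[of _ ?z1] exI[of _ ?z2]) auto
  qed
qed


lemma pairB:
  fixes w w' e :: "bool list"
  assumes A: "take (length w) w' = w" "w \<noteq> w'" and lw': "length w' < r"
  shows "\<exists>z z'. length z = r \<and> length z' = r \<and> z \<noteq> e \<and> z' \<noteq> e \<and> br w z \<noteq> br w z' \<and> br w' z \<noteq> br w' z'"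
proof -
  have lwv: "length w < length w'" using A(1,2) take_eq_len[OF A(1)]
    by (cases "length w = length w'") auto
  define b where "b = w' ! length w"
  obtain z where z: "length z = r" "take (length w') z = w'" "z \<noteq> e" using ex_leaf[OF lw'] by blast
  have l2: "length (w @ [\<not> b]) < r" using lwv lw' by simp
  obtain z' where z': "length z' = r" "take (length (w @ [\<not> b])) z' = w @ [\<not> b]" "z' \<noteq> e"
    using ex_leaf[OF l2] by blast
  have "take (length w) z = take (length w) (take (length w') z)" using lwv by (simp add: min_def)
  then have tz: "take (length w) z = w" using z(2) A(1) by simp
  have "take (length w) (take (length (w @ [\<not> b])) z') = take (length w) (w @ [\<not> b])" using z'(2) by simp
  then have tz': "take (length w) z' = w" by (simp add: min_def)
  have nz: "z ! length w = b" using take_nth[OF z(2) lwv] by (simp add: b_def)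
  have nz': "z' ! length w = (\<not> b)" using take_nth[OF z'(2), of "length w"] by simp
  have b1: "br w z = Some b" using br_some[OF tz] z(1) lw' lwv nz by simp
  have b2: "br w z' = Some (\<not> b)" using br_some[OF tz'] z'(1) lw' lwv nz' by simp
  have b3: "br w' z \<noteq> None" using br_some[OF z(2)] z(1) lw' by simp
  have "take (length w') z' \<noteq> w'"
  proof
    assume "take (length w') z' = w'"
    then have "z' ! length w = w' ! length w" using lwv by (intro take_nth)
    then show False using nz' b_def by simp
  qed
  then have b4: "br w' z' = None" by (rule br_none)
  show ?thesis using z z' b1 b2 b3 b4 by (intro exI[of _ z] exI[of _ z']) auto
qed

lemma sep_pair:
  fixes w w' e :: "bool list"
  assumes r: "r \<ge> 2" and lw: "length w < r" and lw': "length w' < r"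
  shows "\<exists>z z'. length z = r \<and> length z' = r \<and> z \<noteq> e \<and> z' \<noteq> e \<and> br w z \<noteq> br w z' \<and> br w' z \<noteq> br w' z'"
proof (cases "w = w'")
  case True
  show ?thesis
  proof (cases "w = []")
    case True
    have l1: "length [False] < r" "length [True] < r" using r by auto
    obtain z where z: "length z = r" "take (length [False]) z = [False]" "z \<noteq> e" using ex_leaf[OF l1(1)] by blast
    obtain z' where z': "length z' = r" "take (length [True]) z' = [True]" "z' \<noteq> e" using ex_leaf[OF l1(2)] by blast
    have "z ! 0 = False" using take_nth[OF z(2), of 0] by simp
    moreover have "z' ! 0 = True" using take_nth[OF z'(2), of 0] by simp
    moreover have "z \<noteq> []" "z' \<noteq> []" using z(1) z'(1) r by auto
    moreover have "br [] z = Some (z ! 0)" "br [] z' = Some (z' ! 0)" using calculation(3,4) by (simp_all add: br_def)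
    ultimately show ?thesis using z z' True \<open>w = w'\<close> by (intro exI[of _ z] exI[of _ z']) auto
  next
    case False
    have l1: "length [\<not> hd w] < r" using r by auto
    obtain z where z: "length z = r" "take (length w) z = w" "z \<noteq> e" using ex_leaf[OF lw] by blast
    obtain z' where z': "length z' = r" "take (length [\<not> hd w]) z' = [\<not> hd w]" "z' \<noteq> e" using ex_leaf[OF l1] by blast
    have b1: "br w z \<noteq> None" using br_some[OF z(2)] z(1) lw by simp
    have "take (length w) z' \<noteq> w"
    proof
      assume "take (length w) z' = w"
      then have "z' ! 0 = w ! 0" using False by (intro take_nth) auto
      moreover have "z' ! 0 = (\<not> hd w)" using take_nth[OF z'(2), of 0] by simp
      ultimately show False using False by (simp add: hd_conv_nth)
    qed
    then have b2: "br w z' = None" by (rule br_none)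
    show ?thesis using z z' b1 b2 \<open>w = w'\<close> by (intro exI[of _ z] exI[of _ z']) auto
  qed
next
  case ne: False
  show ?thesis
  proof (cases "take (length w) w' = w")
    case True
    show ?thesis using pairB[OF True ne lw'] .
  next
    case nA: False
    show ?thesis
    proof (cases "take (length w') w = w'")
      case True
      obtain z z' where zz: "length z = r" "length z' = r" "z \<noteq> e" "z' \<noteq> e" "br w' z \<noteq> br w' z'" "br w z \<noteq> br w z'"
        using pairB[OF True _ lw, of e] ne by metis
      then show ?thesis by blast
    next
      case nB: False
      obtain z where z: "length z = r" "take (length w) z = w" "z \<noteq> e" using ex_leaf[OF lw] by blast
      obtain z' where z': "length z' = r" "take (length w') z' = w'" "z' \<noteq> e" using ex_leaf[OF lw'] by blast
      have b1: "br w z \<noteq> None" using br_some[OF z(2)] z(1) lw by simp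
      have b2: "br w' z' \<noteq> None" using br_some[OF z'(2)] z'(1) lw' by simp
      have "take (length w) z' \<noteq> w"
      proof
        assume h: "take (length w) z' = w"
        show False
        proof (cases "length w \<le> length w'")
          case True then show False using prefix_comp[OF h z'(2)] nA by simp
        next
          case False then show False using prefix_comp[OF z'(2) h] nB by simp
        qed
      qed
      then have b3: "br w z' = None" by (rule br_none)
      have "take (length w') z \<noteq> w'"
      proof
        assume h: "take (length w') z = w'"
        show False
        proof (cases "length w \<le> length w'")
          case True then show False using prefix_comp[OF z(2) h] nA by simp
        next
          case False then show False using prefix_comp[OF h z(2)] nB by simp
        qed
      qed
      then have b4: "br w' z = None" by (rule br_none)
      show ?thesis using z z' b1 b2 b3 b4 by (intro exI[of _ z] exI[of _ z']) auto
    qed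
  qed
qed

lemma fin_len_eq: "finite {z::bool list. length z = r}"
  using finite_lists_length_eq[of "UNIV::bool set" r] by simp

lemma fin_len_le: "finite {z::bool list. length z \<le> r}"
  using finite_lists_length_le[of "UNIV::bool set" r] by simp

lemma fin_len_less: "finite {z::bool list. length z < r}"
  by (rule finite_subset[OF _ fin_len_le[of r]]) auto

lemma C1:
  assumes r: "r \<ge> 2" and mv: "mutual_visibility_set (GT_V r) (GT_E r) S"
    and card2: "2 \<le> card {w. length w < r \<and> (c,w) \<in> S}"
  shows "2 * card {w. length w < r \<and> (c,w) \<in> S} \<le> card {z. length z = r \<and> (False,z) \<notin> S}"
proof -
  define T where "T = {w. length w < r \<and> (c,w) \<in> S}"
  define M where "M = {z. length z = r \<and> (False,z) \<notin> S}"
  have SV: "S \<subseteq> GT_V r" and vis: "\<And>u v. u \<in> S \<Longrightarrow> v \<in> S \<Longrightarrow> S_visible (GT_V r) (GT_E r) S u v"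
    using mv unfolding mutual_visibility_set_def by auto
  have finT: "finite T" unfolding T_def by (rule finite_subset[OF _ fin_len_less[of r]]) auto
  have finM: "finite M" unfolding M_def by (rule finite_subset[OF _ fin_len_eq[of r]]) auto
  have Tw: "w \<in> T \<Longrightarrow> length w < r \<and> (c,w) \<in> S" for w unfolding T_def by simp
  have same: "br w u = br w v" if "w \<in> T" "u \<in> T" "v \<in> T" "u \<noteq> w" "v \<noteq> w" for w u v
  proof (rule ccontr)
    assume ne: "br w u \<noteq> br w v"
    have "\<not> S_visible (GT_V r) (GT_E r) S (c,u) (canon r (c,v))"
      using block1[OF SV _ _ _ _ that(4) that(5) ne] Tw[OF that(1)] Tw[OF that(2)] Tw[OF that(3)] by simp
    moreover have "canon r (c,v) = (c,v)" using Tw[OF that(3)] by simp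
    ultimately show False using vis Tw[OF that(2)] Tw[OF that(3)] by metis
  qed
  have dead: "(False,z) \<notin> S" if "w \<in> T" "u \<in> T" "u \<noteq> w" "length z = r" "br w z \<noteq> br w u" for w u z
  proof
    assume zS: "(False,z) \<in> S"
    have zw: "z \<noteq> w" using that(4) Tw[OF that(1)] by auto
    have ne: "br w u \<noteq> br w z" using that(5) by simp
    have "\<not> S_visible (GT_V r) (GT_E r) S (c,u) (canon r (c,z))"
      using block1[OF SV _ _ _ _ that(3) zw ne] Tw[OF that(1)] Tw[OF that(2)] that(4) by simp
    moreover have "canon r (c,z) = (False,z)" using that(4) by simp
    ultimately show False using vis Tw[OF that(2)] zS by metis
  qed
  define D where "D w = {z. length z = r \<and> (\<forall>u\<in>T-{w}. br w z \<noteq> br w u)}" for w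
  have other: "\<exists>u. u \<in> T \<and> u \<noteq> w" for w
  proof (rule ccontr)
    assume "\<not> ?thesis"
    then have "T \<subseteq> {w}" by blast
    then have "card T \<le> 1" using card_mono[of "{w}" T] by simp
    then show False using card2 T_def by simp
  qed
  have Dsub: "D w \<subseteq> M" if "w \<in> T" for w
  proof
    fix z assume z: "z \<in> D w"
    obtain u where u: "u \<in> T" "u \<noteq> w" using other by blast
    have "(False,z) \<notin> S" using dead[OF that u(1) u(2)] z u unfolding D_def by blast
    then show "z \<in> M" using z unfolding D_def M_def by simp
  qed
  have Ddisj: "D w \<inter> D v = {}" if "w \<in> T" "v \<in> T" "w \<noteq> v" for w v
  proof (rule ccontr)
    assume "D w \<inter> D v \<noteq> {}"
    then obtain z where z: "z \<in> D w" "z \<in> D v" by blast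
    have "br w z \<noteq> br w v" using z(1) that unfolding D_def by blast
    moreover have "br v z \<noteq> br v w" using z(2) that unfolding D_def by blast
    moreover have "length w < length z" "length v < length z" using z(1) Tw[OF that(1)] Tw[OF that(2)] unfolding D_def by auto
    ultimately show False using br_disj[OF that(3)] by blast
  qed
  have Dcard: "2 \<le> card (D w)" if wT: "w \<in> T" for w
  proof -
    obtain u0 where u0: "u0 \<in> T" "u0 \<noteq> w" using other by blast
    obtain z1 z2 where zz: "z1 \<noteq> z2" "length z1 = r" "length z2 = r" "br w z1 \<noteq> br w u0" "br w z2 \<noteq> br w u0"
      using two_leaves[OF r, of w "br w u0"] Tw[OF wT] by blast
    have "\<forall>u\<in>T-{w}. br w u = br w u0" using same[OF wT _ u0(1) _ u0(2)] by blast
    then have "{z1, z2} \<subseteq> D w" using zz unfolding D_def by auto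
    moreover have "finite (D w)" unfolding D_def by (rule finite_subset[OF _ fin_len_eq[of r]]) auto
    ultimately have "card {z1, z2} \<le> card (D w)" by (rule card_mono[rotated])
    then show ?thesis using zz(1) by simp
  qed
  have finD: "finite (D w)" for w unfolding D_def by (rule finite_subset[OF _ fin_len_eq[of r]]) auto
  have "2 * card T = (\<Sum>w\<in>T. 2)" by simp
  also have "\<dots> \<le> (\<Sum>w\<in>T. card (D w))" using Dcard by (intro sum_mono) auto
  also have "\<dots> = card (\<Union>w\<in>T. D w)" using finT finD Ddisj by (intro card_UN_disjoint[symmetric]) auto
  also have "\<dots> \<le> card M" using Dsub finM by (intro card_mono) auto
  finally show ?thesis unfolding T_def M_def .
qed

lemma C2:
  assumes r: "r \<ge> 2" and mv: "mutual_visibility_set (GT_V r) (GT_E r) S"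
    and w: "(False,w) \<in> S" "length w < r" and w': "(True,w') \<in> S" "length w' < r"
  shows "2 \<le> card {z. length z = r \<and> (False,z) \<notin> S}"
proof (rule ccontr)
  define M where "M = {z. length z = r \<and> (False,z) \<notin> S}"
  assume "\<not> 2 \<le> card {z. length z = r \<and> (False,z) \<notin> S}"
  then have c: "card M \<le> Suc 0" unfolding M_def by simp
  have finM: "finite M" unfolding M_def by (rule finite_subset[OF _ fin_len_eq[of r]]) auto
  have "\<forall>x\<in>M. \<forall>y\<in>M. x = y" using c card_le_Suc0_iff_eq[OF finM] by blast
  then obtain e where e: "M \<subseteq> {e}" by (cases "M = {}") auto
  have SV: "S \<subseteq> GT_V r" and vis: "\<And>u v. u \<in> S \<Longrightarrow> v \<in> S \<Longrightarrow> S_visible (GT_V r) (GT_E r) S u v"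
    using mv unfolding mutual_visibility_set_def by auto
  obtain z z' where zz: "length z = r" "length z' = r" "z \<noteq> e" "z' \<noteq> e" "br w z \<noteq> br w z'" "br w' z \<noteq> br w' z'"
    using sep_pair[OF r w(2) w'(2), of e] by blast
  have "(False,z) \<in> S" using zz e unfolding M_def by auto
  moreover have "(False,z') \<in> S" using zz e unfolding M_def by auto
  moreover have "\<not> S_visible (GT_V r) (GT_E r) S (False,z) (False,z')"
    using block2[OF SV w(1) w'(1) w(2) w'(2) zz(1,2,5,6)] .
  ultimately show False using vis by blast
qed


lemma tree_sp:
  assumes "length a \<le> r" "length b \<le> r"
  shows "\<exists>q. shortest_path (GT_V r) (GT_E r) (canon r (c,a)) (canon r (c,b)) q \<and>
        (\<forall>y\<in>set q. y = canon r (c,a) \<or> y = canon r (c,b) \<or> (fst y = c \<and> length (snd y) < r))"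
proof -
  obtain q where q: "walk (GT_V r) (GT_E r) q" "hd q = canon r (c,a)" "last q = canon r (c,b)" "length q = dT a b + 1"
    "\<forall>y\<in>set q. y = canon r (c,a) \<or> y = canon r (c,b) \<or> (fst y = c \<and> length (snd y) < r)"
    using tree_path'[OF assms, of c] by blast
  have "length q \<le> length q'" if "walk (GT_V r) (GT_E r) q'" "hd q' = canon r (c,a)" "last q' = canon r (c,b)" for q'
  proof -
    have "dT a b \<le> length q' - 1" using walk_ends_dist[OF that(1)] that(2,3) by simp
    moreover have "q' \<noteq> []" using that(1) by (simp add: walk_def)
    ultimately show ?thesis using q(4) by (cases "length q'") auto
  qed
  then have "shortest_path (GT_V r) (GT_E r) (canon r (c,a)) (canon r (c,b)) q"
    using q unfolding shortest_path_def by blast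
  then show ?thesis using q(5) by blast
qed

definition Lset :: "nat \<Rightarrow> (bool \<times> bool list) set" where
  "Lset r = (\<lambda>z. (False, z)) ` {z. length z = r}"

lemma construction:
  assumes x: "length (snd x) < r"
  shows "mutual_visibility_set (GT_V r) (GT_E r) (Lset r \<union> {x})"
proof -
  obtain c w where xcw: "x = (c,w)" by (cases x)
  have lw: "length w < r" using x xcw by simp
  let ?S = "Lset r \<union> {x}"
  have SV: "?S \<subseteq> GT_V r" using lw xcw unfolding Lset_def by (auto simp: GT_V_iff)
  have inS: "y \<in> ?S \<longleftrightarrow> (fst y = False \<and> length (snd y) = r) \<or> y = (c,w)" for y
    unfolding Lset_def xcw by (cases y) auto
  have vis: "S_visible (GT_V r) (GT_E r) ?S u v" if u: "u \<in> ?S" and v: "v \<in> ?S" for u v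
  proof -
    have cS: "y = canon r (c, snd y)" if "y \<in> ?S" for y
      using that inS[of y] lw by (cases y) (auto simp: canon_def)
    have cL: "y = canon r (c', snd y)" if "y \<in> ?S" "y \<noteq> (c,w)" for y c'
      using that inS[of y] lw by (cases y) (auto simp: canon_def)
    have lS: "length (snd y) \<le> r" if "y \<in> ?S" for y
      using that inS[of y] lw by auto
    define a where "a = snd u"
    define b where "b = snd v"
    have la: "length a \<le> r" using lS[OF u] a_def by simp
    have lb: "length b \<le> r" using lS[OF v] b_def by simp
    show ?thesis
    proof (cases "u = (c,w) \<or> v = (c,w)")
      case True
      have ue: "u = canon r (c,a)" using cS[OF u] a_def by simp
      have ve: "v = canon r (c,b)" using cS[OF v] b_def by simp
      obtain q where q: "shortest_path (GT_V r) (GT_E r) (canon r (c,a)) (canon r (c,b)) q"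
        "\<forall>y\<in>set q. y = canon r (c,a) \<or> y = canon r (c,b) \<or> (fst y = c \<and> length (snd y) < r)"
        using tree_sp[OF la lb, of c] by blast
      have "set q \<inter> ?S \<subseteq> {u, v}"
      proof
        fix y assume y: "y \<in> set q \<inter> ?S"
        then have "y = u \<or> y = v \<or> (fst y = c \<and> length (snd y) < r)" using q(2) ue ve by blast
        moreover have "(fst y = c \<and> length (snd y) < r) \<Longrightarrow> y = (c,w)" using y inS[of y] by auto
        ultimately show "y \<in> {u, v}" using True by auto
      qed
      then show ?thesis unfolding S_visible_def using q(1) ue ve by blast
    next
      case False
      have ue: "u = canon r (\<not> c,a)" using cL[OF u] False a_def by simp
      have ve: "v = canon r (\<not> c,b)" using cL[OF v] False b_def by simp
      obtain q where q: "shortest_path (GT_V r) (GT_E r) (canon r (\<not> c,a)) (canon r (\<not> c,b)) q"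
        "\<forall>y\<in>set q. y = canon r (\<not> c,a) \<or> y = canon r (\<not> c,b) \<or> (fst y = (\<not> c) \<and> length (snd y) < r)"
        using tree_sp[OF la lb, of "\<not> c"] by blast
      have "set q \<inter> ?S \<subseteq> {u, v}"
      proof
        fix y assume y: "y \<in> set q \<inter> ?S"
        then have "y = u \<or> y = v \<or> (fst y = (\<not> c) \<and> length (snd y) < r)" using q(2) ue ve by blast
        moreover have "\<not> (fst y = (\<not> c) \<and> length (snd y) < r)" using y inS[of y] by auto
        ultimately show "y \<in> {u, v}" by auto
      qed
      then show ?thesis unfolding S_visible_def using q(1) ue ve by blast
    qed
  qed
  show ?thesis unfolding mutual_visibility_set_def using SV vis by blast
qed


lemma card_leaves: "card {z::bool list. length z = r} = 2 ^ r"
  using card_lists_length_eq[of "UNIV::bool set" r] by simp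

lemma card_words_less: "card {z::bool list. length z < r} = 2 ^ r - 1"
proof (induction r)
  case 0 then show ?case by simp
next
  case (Suc r)
  have "{z::bool list. length z < Suc r} = {z. length z < r} \<union> {z. length z = r}" by auto
  moreover have "{z::bool list. length z < r} \<inter> {z. length z = r} = {}" by auto
  ultimately have "card {z::bool list. length z < Suc r} = card {z::bool list. length z < r} + card {z::bool list. length z = r}"
    using fin_len_less[of r] fin_len_eq[of r] by (simp add: card_Un_disjoint)
  also have "\<dots> = 2 ^ r - 1 + 2 ^ r" using Suc card_leaves[of r] by simp
  also have "\<dots> = 2 ^ Suc r - 1" by simp
  finally show ?case .
qed

lemma card_Lset: "card (Lset r) = 2 ^ r"
  unfolding Lset_def by (subst card_image) (auto simp: inj_on_def card_leaves)

lemma finite_Lset: "finite (Lset r)"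
  unfolding Lset_def using fin_len_eq by simp

lemma arith_aux:
  fixes k0 k1 m :: nat
  assumes a: "2 \<le> k0 \<longrightarrow> 2 * k0 \<le> m" and b: "2 \<le> k1 \<longrightarrow> 2 * k1 \<le> m" and c: "1 \<le> k0 \<and> 1 \<le> k1 \<longrightarrow> 2 \<le> m"
  shows "k0 + k1 \<le> m + 1 \<and> (k0 + k1 = m + 1 \<longrightarrow> m = 0 \<and> k0 + k1 = 1)"
proof (cases "2 \<le> k0")
  case True
  then have "2 * k0 \<le> m" using a by blast
  then show ?thesis using b True by (cases "2 \<le> k1") auto
next
  case False
  then have k0: "k0 \<le> 1" by simp
  show ?thesis
  proof (cases "2 \<le> k1")
    case True
    then have "2 * k1 \<le> m" using b by blast
    then show ?thesis using k0 True by auto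
  next
    case False
    then have k1: "k1 \<le> 1" by simp
    show ?thesis using k0 k1 c by (cases "k0 = 1"; cases "k1 = 1") auto
  qed
qed

lemma upper:
  assumes r: "r \<ge> 2" and mv: "mutual_visibility_set (GT_V r) (GT_E r) S"
  shows "card S \<le> 2 ^ r + 1 \<and> (card S = 2 ^ r + 1 \<longrightarrow> (\<exists>x. length (snd x) < r \<and> S = Lset r \<union> {x}))"
proof -
  define A where "A = {z. length z = r \<and> (False,z) \<in> S}"
  define M where "M = {z. length z = r \<and> (False,z) \<notin> S}"
  define T where "T c = {w. length w < r \<and> (c,w) \<in> S}" for c
  have SV: "S \<subseteq> GT_V r" using mv unfolding mutual_visibility_set_def by blast
  have finA: "finite A" unfolding A_def by (rule finite_subset[OF _ fin_len_eq[of r]]) auto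
  have finM: "finite M" unfolding M_def by (rule finite_subset[OF _ fin_len_eq[of r]]) auto
  have finT: "finite (T c)" for c unfolding T_def by (rule finite_subset[OF _ fin_len_less[of r]]) auto
  have AM: "card A + card M = 2 ^ r"
  proof -
    have "A \<union> M = {z. length z = r}" "A \<inter> M = {}" unfolding A_def M_def by auto
    then show ?thesis using card_Un_disjoint[OF finA finM] card_leaves[of r] by simp
  qed
  have Sdec: "S = (Pair False ` A \<union> Pair False ` T False) \<union> Pair True ` T True"
  proof
    show "S \<subseteq> (Pair False ` A \<union> Pair False ` T False) \<union> Pair True ` T True"
    proof
      fix y assume y: "y \<in> S"
      obtain c w where ycw: "y = (c,w)" by (cases y)
      have "length w \<le> r" "length w = r \<longrightarrow> c = False" using SV y ycw by (auto simp: GT_V_iff)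
      then show "y \<in> (Pair False ` A \<union> Pair False ` T False) \<union> Pair True ` T True"
        using y ycw unfolding A_def T_def by (cases c) (auto simp: le_less)
    qed
  next
    show "(Pair False ` A \<union> Pair False ` T False) \<union> Pair True ` T True \<subseteq> S"
      unfolding A_def T_def by auto
  qed
  have cS: "card S = card A + card (T False) + card (T True)"
  proof -
    have d1: "Pair False ` A \<inter> Pair False ` T False = {}" unfolding A_def T_def by auto
    have d2: "(Pair False ` A \<union> Pair False ` T False) \<inter> Pair True ` T True = {}" by auto
    have "card S = card (Pair False ` A \<union> Pair False ` T False) + card (Pair True ` T True)"
      using Sdec d2 finA finT by (metis card_Un_disjoint finite_UnI finite_imageI)
    also have "card (Pair False ` A \<union> Pair False ` T False) = card (Pair False ` A) + card (Pair False ` T False)"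
      using d1 finA finT by (intro card_Un_disjoint) auto
    also have "card (Pair False ` A) = card A" by (intro card_image) (auto simp: inj_on_def)
    also have "card (Pair False ` T False) = card (T False)" by (intro card_image) (auto simp: inj_on_def)
    also have "card (Pair True ` T True) = card (T True)" by (intro card_image) (auto simp: inj_on_def)
    finally show ?thesis .
  qed
  have h1: "2 \<le> card (T c) \<longrightarrow> 2 * card (T c) \<le> card M" for c
    using C1[OF r mv, of c] unfolding T_def M_def by blast
  have h2: "1 \<le> card (T False) \<and> 1 \<le> card (T True) \<longrightarrow> 2 \<le> card M"
  proof
    assume "1 \<le> card (T False) \<and> 1 \<le> card (T True)"
    then have "T False \<noteq> {}" "T True \<noteq> {}" by auto
    then obtain w w' where "w \<in> T False" "w' \<in> T True" by blast
    then show "2 \<le> card M" using C2[OF r mv, of w w'] unfolding T_def M_def by blast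
  qed
  have ar: "card (T False) + card (T True) \<le> card M + 1 \<and>
      (card (T False) + card (T True) = card M + 1 \<longrightarrow> card M = 0 \<and> card (T False) + card (T True) = 1)"
    using arith_aux[OF h1[of False] h1[of True] h2] .
  have le: "card S \<le> 2 ^ r + 1" using cS AM ar by linarith
  have eq: "\<exists>x. length (snd x) < r \<and> S = Lset r \<union> {x}" if ceq: "card S = 2 ^ r + 1"
  proof -
    have m0: "card M = 0" and k1: "card (T False) + card (T True) = 1" using ceq cS AM ar by auto
    have "M = {}" using m0 finM by simp
    then have AL: "Pair False ` A = Lset r" unfolding Lset_def A_def M_def by auto
    obtain c w where cw: "T c = {w}" "T (\<not> c) = {}"
    proof (cases "card (T False) = 1")
      case True
      then obtain w where "T False = {w}" by (auto simp: card_Suc_eq)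
      moreover have "T True = {}" using True k1 finT[of True] by simp
      ultimately show ?thesis using that[of False w] by simp
    next
      case False
      then have "card (T True) = 1" "card (T False) = 0" using k1 by auto
      then obtain w where "T True = {w}" "T False = {}" using finT[of False] by (auto simp: card_Suc_eq)
      then show ?thesis using that[of True w] by simp
    qed
    have lw: "length w < r" using cw(1) unfolding T_def by auto
    have "S = Lset r \<union> {(c,w)}"
      using Sdec AL cw by (cases c) auto
    then show ?thesis using lw by (intro exI[of _ "(c,w)"]) simp
  qed
  show ?thesis using le eq by blast
qed

theorem mainTheorem3:
  fixes r :: nat
  assumes "r \<ge> 2"
  shows "mu (GT_V r) (GT_E r) = 2 ^ r + 1 \<and> card (mu_sets (GT_V r) (GT_E r)) = 2 ^ (r + 1) - 2"
proof -
  have r: "r \<ge> 2" by (rule assms)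
  have notL: "x \<notin> Lset r" if "length (snd x) < r" for x
    using that unfolding Lset_def by auto
  have cardLx: "card (Lset r \<union> {x}) = 2 ^ r + 1" if "length (snd x) < r" for x
    using notL[OF that] finite_Lset[of r] card_Lset[of r] by simp
  define C where "C = {card S | S. mutual_visibility_set (GT_V r) (GT_E r) S}"
  have x0: "length (snd (False, [] :: bool list)) < r" using r by simp
  have mv0: "mutual_visibility_set (GT_V r) (GT_E r) (Lset r \<union> {(False, [])})" by (rule construction[OF x0])
  have c0: "card (Lset r \<union> {(False, [])}) = 2 ^ r + 1" by (rule cardLx[OF x0])
  have inC: "2 ^ r + 1 \<in> C" unfolding C_def
  proof (rule CollectI, intro exI conjI)
    show "2 ^ r + 1 = card (Lset r \<union> {(False, [])})" using c0 by simp
  qed (rule mv0)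
  have boundC: "n \<le> 2 ^ r + 1" if nC: "n \<in> C" for n
  proof -
    obtain S where S: "n = card S" "mutual_visibility_set (GT_V r) (GT_E r) S" using nC unfolding C_def by blast
    show ?thesis using upper[OF r S(2)] S(1) by simp
  qed
  have "C \<subseteq> {..2 ^ r + 1}" using boundC by auto
  then have finC: "finite C" by (rule finite_subset) simp
  have mu: "mu (GT_V r) (GT_E r) = 2 ^ r + 1"
    unfolding mu_def C_def[symmetric] using finC inC boundC by (intro Max_eqI) auto
  define N where "N = {x :: bool \<times> bool list. length (snd x) < r}"
  have ms: "mu_sets (GT_V r) (GT_E r) = (\<lambda>x. Lset r \<union> {x}) ` N"
  proof
    show "mu_sets (GT_V r) (GT_E r) \<subseteq> (\<lambda>x. Lset r \<union> {x}) ` N"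
    proof
      fix S assume "S \<in> mu_sets (GT_V r) (GT_E r)"
      then have S: "mutual_visibility_set (GT_V r) (GT_E r) S" "card S = 2 ^ r + 1"
        unfolding mu_sets_def mu by auto
      obtain x where x: "length (snd x) < r" "S = Lset r \<union> {x}" using upper[OF r S(1)] S(2) by blast
      then show "S \<in> (\<lambda>x. Lset r \<union> {x}) ` N" unfolding N_def by blast
    qed
    show "(\<lambda>x. Lset r \<union> {x}) ` N \<subseteq> mu_sets (GT_V r) (GT_E r)"
    proof
      fix S assume "S \<in> (\<lambda>x. Lset r \<union> {x}) ` N"
      then obtain x where x: "length (snd x) < r" "S = Lset r \<union> {x}" unfolding N_def by blast
      have "mutual_visibility_set (GT_V r) (GT_E r) S" using construction[OF x(1)] x(2) by simp
      moreover have "card S = mu (GT_V r) (GT_E r)" using cardLx[OF x(1)] x(2) mu by simp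
      ultimately show "S \<in> mu_sets (GT_V r) (GT_E r)" unfolding mu_sets_def by blast
    qed
  qed
  have inj: "inj_on (\<lambda>x. Lset r \<union> {x}) N"
  proof (rule inj_onI)
    fix x y assume xy: "x \<in> N" "y \<in> N" "Lset r \<union> {x} = Lset r \<union> {y}"
    have "x \<notin> Lset r" "y \<notin> Lset r" using xy(1,2) notL unfolding N_def by auto
    then show "x = y" using xy(3) by blast
  qed
  have NU: "N = UNIV \<times> {w::bool list. length w < r}" unfolding N_def by auto
  have cN: "card N = 2 * (2 ^ r - 1)"
    unfolding NU using card_words_less[of r] by (simp add: card_cartesian_product)
  have "card (mu_sets (GT_V r) (GT_E r)) = card N" unfolding ms using inj by (rule card_image)
  also have "\<dots> = 2 ^ (r + 1) - 2" using cN by (simp add: diff_mult_distrib2)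
  finally show ?thesis using mu by simp
qed

end
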